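(* Let $q=2$, $r\ge3$, $m=2r$, $D=\{x\in\mathbb{F}_{2^m}:\mathrm{Tr}_{2^r/2}(x^{2^r+1})=0\}$ and $\overline{\mathcal{C}_D}=\{(\mathrm{Tr}_{2^m/2}(bx)+c)_{x\in D}:b\in\mathbb{F}_{2^m},c\in\mathbb{F}_2\}$. Then $\overline{\mathcal{C}_D}$ has parameters $[2^{r-1}(2^r-1),\ m+1,\ 2^{r-1}(2^{r-1}-1)]$ and weight enumerator $$1+(2^{2r}-1)z^{2^{r-1}(2^{r-1}-1)}+(2^{2r}-1)z^{2^{2r-2}}+z^{2^{r-1}(2^r-1)}.$$ The dual $\overline{\mathcal{C}_D}^{\perp}$ has parameters $[2^{r-1}(2^r-1),\ 2^{r-1}(2^r-1)-m-1,\ 4]$. The minimum weight codewords of $\overline{\mathcal{C}_D}$ hold a $2$-$(2^{r-1}(2^r-1),\ 2^{r-1}(2^{r-1}-1),\ 2^{2r-2}-2^{r-1}-1)$ design, and the minimum weight codewords of $\overline{\mathcal{C}_D}^{\perp}$ hold a $2$-$(2^{r-1}(2^r-1),\ 4,\ 2^{2r-3}-2^{r-2}-1)$ design.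
   Context: A $t$-$(n,\kappa,\lambda)$ design is a pair $(\mathcal{P},\mathcal{B})$ where $|\mathcal{P}|=n$ and $\mathcal{B}$ is a set of $\kappa$-subsets of $\mathcal{P}$ such that every $t$-subset of $\mathcal{P}$ lies in exactly $\lambda$ members of $\mathcal{B}$. The codewords of weight $\kappa$ of a code of length $n$ hold a design if, with $\mathcal{P}$ the set of coordinate positions and $\mathcal{B}$ the set of supports $\{i:c_i\ne0\}$ of codewords of weight $\kappa$, $(\mathcal{P},\mathcal{B})$ is such a design. *)

theory Defs
  imports Main "HOL-Computational_Algebra.Polynomial"
begin

text \<open>Absolute trace from a field of order 2^k down to F_2 (F_2 = {0,1} inside the field).\<close>
definition tr :: "nat \<Rightarrow> 'a::field \<Rightarrow> 'a" where
  "tr k x = (\<Sum>i<k. x ^ (2 ^ i))"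

text \<open>Words of length |D|: coordinates indexed by the set D, entries in F_2 = {0,1},
  extended by 0 outside D.\<close>
definition bword :: "'a set \<Rightarrow> ('a \<Rightarrow> 'b::{zero,one}) \<Rightarrow> bool" where
  "bword D v \<longleftrightarrow> (\<forall>x\<in>D. v x \<in> {0, 1}) \<and> (\<forall>x. x \<notin> D \<longrightarrow> v x = 0)"

definition supp :: "'a set \<Rightarrow> ('a \<Rightarrow> 'b::zero) \<Rightarrow> 'a set" where
  "supp D c = {x \<in> D. c x \<noteq> 0}"

definition wt :: "'a set \<Rightarrow> ('a \<Rightarrow> 'b::zero) \<Rightarrow> nat" where
  "wt D c = card (supp D c)"

definition min_dist :: "'a set \<Rightarrow> ('a \<Rightarrow> 'b::zero) set \<Rightarrow> nat" where
  "min_dist D C = Min {wt D c | c. c \<in> C \<and> c \<noteq> (\<lambda>_. 0)}"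

text \<open>Binary linear code with parameters [n,k,d] on coordinate set D
  (dimension k over F_2, i.e. 2^k codewords).\<close>
definition has_params :: "'a set \<Rightarrow> ('a \<Rightarrow> 'b::{zero,one,plus}) set \<Rightarrow> nat \<Rightarrow> nat \<Rightarrow> nat \<Rightarrow> bool" where
  "has_params D C n k d \<longleftrightarrow> card D = n \<and> card C = 2 ^ k \<and> min_dist D C = d"

text \<open>Dual code (standard inner product over F_2, computed in the ambient field of char. 2).\<close>
definition dual_code :: "'a set \<Rightarrow> ('a \<Rightarrow> 'b::comm_ring_1) set \<Rightarrow> ('a \<Rightarrow> 'b) set" where
  "dual_code D C = {v. bword D v \<and> (\<forall>c\<in>C. (\<Sum>x\<in>D. v x * c x) = 0)}"

definition weight_enum :: "'a set \<Rightarrow> ('a \<Rightarrow> 'b::zero) set \<Rightarrow> int poly" where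
  "weight_enum D C = (\<Sum>c\<in>C. monom 1 (wt D c))"

definition is_design :: "'a set \<Rightarrow> 'a set set \<Rightarrow> nat \<Rightarrow> nat \<Rightarrow> nat \<Rightarrow> nat \<Rightarrow> bool" where
  "is_design P B t n \<kappa> lam \<longleftrightarrow> finite P \<and> card P = n \<and>
     (\<forall>b\<in>B. b \<subseteq> P \<and> card b = \<kappa>) \<and>
     (\<forall>T. T \<subseteq> P \<and> card T = t \<longrightarrow> card {b\<in>B. T \<subseteq> b} = lam)"

definition holds_design :: "'a set \<Rightarrow> ('a \<Rightarrow> 'b::zero) set \<Rightarrow> nat \<Rightarrow> nat \<Rightarrow> nat \<Rightarrow> nat \<Rightarrow> bool" where
  "holds_design D C t n \<kappa> lam \<longleftrightarrow>
     is_design D (supp D ` {c \<in> C. wt D c = \<kappa>}) t n \<kappa> lam"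

end

theory Submission
  imports Defs
begin
lemma char2:
  assumes "even (card (UNIV::'a::{field,finite} set))"
  shows "(2::'a) = 0"
proof (rule ccontr)
  assume ne: "(2::'a) \<noteq> 0"
  have neg: "x \<noteq> - x" if "x \<noteq> 0" for x :: 'a
  proof
    assume "x = - x"
    then have "2 * x = 0" by (metis add_eq_0_iff mult_2)
    with ne that show False by simp
  qed
  define P where "P = (\<lambda>x::'a. {x, -x}) ` (UNIV - {0})"
  have "finite P" by simp
  have c2: "\<forall>c\<in>P. card c = 2" using neg unfolding P_def by auto
  have disj: "\<forall>c1\<in>P. \<forall>c2\<in>P. c1 \<noteq> c2 \<longrightarrow> c1 \<inter> c2 = {}"
    unfolding P_def by auto
  have un: "\<Union>P = UNIV - {0}" unfolding P_def by auto
  have "2 * card P = card (\<Union>P)"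
    by (rule card_partition) (use c2 disj \<open>finite P\<close> in auto)
  also have "\<dots> = card (UNIV::'a set) - 1" using un by (simp add: card_Diff_singleton)
  finally have "even (card (UNIV::'a set) - 1)" by (metis dvd_triv_left)
  moreover have "card (UNIV::'a set) \<ge> 1" by (simp add: Suc_le_eq card_gt_0_iff)
  ultimately show False using assms
    by (cases "card (UNIV::'a set)") auto
qed

lemma fermat:
  fixes x :: "'a::{field,finite}"
  shows "x ^ card (UNIV::'a set) = x"
proof (cases "x = 0")
  case True then show ?thesis by (simp add: power_0_left)
next
  case False
  let ?U = "UNIV - {0::'a}"
  have inj: "inj_on (\<lambda>y. x * y) ?U" using False by (auto simp: inj_on_def)
  have im: "(\<lambda>y. x * y) ` ?U = ?U"
  proof
    show "?U \<subseteq> (\<lambda>y. x * y) ` ?U"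
    proof
      fix z assume "z \<in> ?U"
      then have "z = x * (z / x)" "z / x \<in> ?U" using False by auto
      then show "z \<in> (\<lambda>y. x * y) ` ?U" by blast
    qed
  qed (use False in auto)
  have "prod (\<lambda>y. y) ?U = prod (\<lambda>y. y) ((\<lambda>y. x * y) ` ?U)" using im by simp
  also have "\<dots> = prod (\<lambda>y. x * y) ?U" using prod.reindex[OF inj] by simp
  also have "\<dots> = x ^ card ?U * prod (\<lambda>y. y) ?U" by (simp add: prod.distrib)
  finally have "x ^ card ?U = 1"
    by (metis (no_types, lifting) DiffE finite mult_cancel_right1 prod_zero_iff singletonI)
  moreover have "card ?U = card (UNIV::'a set) - 1" by (simp add: card_Diff_singleton)
  moreover have "card (UNIV::'a set) \<ge> 1" by (simp add: Suc_le_eq card_gt_0_iff)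
  ultimately show ?thesis by (cases "card (UNIV::'a set)") auto
qed


lemma sq_add_char2:
  fixes x y :: "'a::comm_ring_1"
  assumes "(2::'a) = 0"
  shows "(x + y)^2 = x^2 + y^2"
proof -
  have "(x+y)^2 = x^2 + y^2 + 2*x*y" by (simp add: power2_eq_square algebra_simps)
  then show ?thesis using assms by simp
qed

lemma pow2_add_char2:
  fixes x y :: "'a::comm_ring_1"
  assumes "(2::'a) = 0"
  shows "(x + y)^(2^i) = x^(2^i) + y^(2^i)"
proof (induction i)
  case 0 then show ?case by simp
next
  case (Suc i)
  have "(x + y)^(2^Suc i) = ((x+y)^(2^i))^2" by (simp add: power_mult[symmetric] mult.commute)
  also have "\<dots> = (x^(2^i))^2 + (y^(2^i))^2" using Suc sq_add_char2[OF assms] by simp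
  also have "\<dots> = x^(2^Suc i) + y^(2^Suc i)" by (simp add: power_mult[symmetric] mult.commute)
  finally show ?case .
qed

lemma pow2_sum_char2:
  fixes f :: "'b \<Rightarrow> 'a::comm_ring_1"
  assumes "(2::'a) = 0"
  shows "(sum f S)^(2^i) = (\<Sum>s\<in>S. (f s)^(2^i))"
proof (cases "finite S")
  case True then show ?thesis
    by (induction S rule: finite_induct) (simp_all add: pow2_add_char2[OF assms] power_0_left)
qed (simp add: power_0_left)

lemma neg_char2:
  fixes x :: "'a::comm_ring_1"
  assumes "(2::'a) = 0"
  shows "- x = x"
proof -
  have "x + x = 2 * x" by simp
  then have "x + x = 0" using assms by simp
  then show ?thesis by (metis add_eq_0_iff)
qed

lemma add_self_char2:
  fixes x :: "'a::comm_ring_1"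
  assumes "(2::'a) = 0"
  shows "x + x = 0"
  using neg_char2[OF assms, of x] by (metis add.right_inverse)

lemma eq_iff_add_char2:
  fixes x y :: "'a::comm_ring_1"
  assumes "(2::'a) = 0"
  shows "x + y = 0 \<longleftrightarrow> x = y"
  by (metis add_eq_0_iff assms neg_char2)

lemma tr_add:
  fixes x y :: "'a::field"
  assumes "(2::'a) = 0"
  shows "tr k (x + y) = tr k x + tr k y"
  unfolding tr_def by (simp add: pow2_add_char2[OF assms] sum.distrib)

lemma tr_zero[simp]: "tr k (0::'a::field) = 0"
  unfolding tr_def by (simp add: power_0_left)

lemma tr_sum:
  fixes f :: "'b \<Rightarrow> 'a::field"
  assumes "(2::'a) = 0"
  shows "tr k (sum f S) = (\<Sum>s\<in>S. tr k (f s))"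
proof (cases "finite S")
  case True then show ?thesis
    by (induction S rule: finite_induct) (simp_all add: tr_add[OF assms])
qed simp

lemma tr_sq:
  fixes x :: "'a::field"
  assumes "(2::'a) = 0"
  shows "(tr k x)^2 + x = tr k x + x^(2^k)"
proof -
  have "(tr k x)^2 = (\<Sum>i<k. x^(2^Suc i))"
    unfolding tr_def using pow2_sum_char2[OF assms, of "\<lambda>i. x^(2^i)" "{..<k}" 1]
    by (simp add: power_mult[symmetric] mult.commute)
  moreover have "tr (Suc k) x = x + (\<Sum>i<k. x^(2^Suc i))"
    unfolding tr_def by (subst sum.lessThan_Suc_shift) simp
  ultimately have "(tr k x)^2 + x = tr (Suc k) x" by (simp add: add.commute)
  also have "\<dots> = tr k x + x^(2^k)" unfolding tr_def by simp
  finally show ?thesis .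
qed

lemma tr_01:
  fixes x :: "'a::field"
  assumes "(2::'a) = 0" "x^(2^k) = x"
  shows "tr k x = 0 \<or> tr k x = 1"
proof -
  have "(tr k x)^2 = tr k x" using tr_sq[OF assms(1), of k x] assms(2) by simp
  then have "tr k x * (tr k x - 1) = 0" by (simp add: power2_eq_square algebra_simps)
  then show ?thesis by simp
qed

lemma card_pow_eq_le:
  fixes c :: "'a::field"
  assumes "n \<ge> 1"
  shows "card {x. x^n = c} \<le> n"
proof -
  define p where "p = monom (1::'a) n - [:c:]"
  have cp: "coeff p n = 1" using assms unfolding p_def by (simp add: coeff_pCons split: nat.split)
  then have "p \<noteq> 0" by auto
  have "degree p \<le> n" unfolding p_def
    by (metis degree_diff_le degree_monom_le degree_pCons_0 le0)
  moreover have "{x. x^n = c} = {x. poly p x = 0}" unfolding p_def by (auto simp: poly_monom)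
  ultimately show ?thesis using card_poly_roots_bound[OF \<open>p \<noteq> 0\<close>] by simp
qed

lemma card_tr_roots_le:
  fixes dummy :: "'a::field"
  assumes "k \<ge> 1"
  shows "card {x::'a. tr k x = 0} \<le> 2^(k-1)"
proof -
  define p where "p = (\<Sum>i<k. monom (1::'a) (2^i))"
  have "coeff p (2^(k-1)) = (\<Sum>i<k. if 2^i = (2::nat)^(k-1) then 1 else 0)"
    unfolding p_def coeff_sum by (simp add: coeff_monom)
  also have "\<dots> = (\<Sum>i\<in>{k-1}. 1)"
    by (rule sum.mono_neutral_cong_right) (use assms in auto)
  finally have cp: "coeff p (2^(k-1)) = 1" by simp
  then have "p \<noteq> 0" by auto
  have "degree p \<le> 2^(k-1)" unfolding p_def
    by (rule degree_sum_le) (auto intro!: order.trans[OF degree_monom_le] power_increasing)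
  moreover have "{x. tr k x = 0} = {x. poly p x = 0}" unfolding p_def tr_def
    by (auto simp: poly_sum poly_monom)
  ultimately show ?thesis using card_poly_roots_bound[OF \<open>p \<noteq> 0\<close>] by simp
qed


lemma half_count:
  fixes g :: "'a::{comm_ring_1} \<Rightarrow> 'a" and A :: "'a set"
  assumes fin: "finite A" and two: "(2::'a) = 0"
    and add: "\<And>x y. g (x + y) = g x + g y"
    and v01: "\<And>x. x \<in> A \<Longrightarrow> g x = 0 \<or> g x = 1"
    and clos: "\<And>x y. x \<in> A \<Longrightarrow> y \<in> A \<Longrightarrow> x + y \<in> A"
    and t: "t \<in> A" "g t = 1"
  shows "card {u\<in>A. g u = 0} = card {u\<in>A. g u = 1}"
    and "card {u\<in>A. g u = 0} + card {u\<in>A. g u = 1} = card A"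
proof -
  have bij: "bij_betw (\<lambda>u. u + t) {u\<in>A. g u = 0} {u\<in>A. g u = 1}"
  proof (rule bij_betw_byWitness[where f'="\<lambda>u. u + t"])
    show "\<forall>a\<in>{u \<in> A. g u = 0}. a + t + t = a"
      using add_self_char2[OF two, of t] by (simp add: add.assoc)
    show "\<forall>a\<in>{u \<in> A. g u = 1}. a + t + t = a"
      using add_self_char2[OF two, of t] by (simp add: add.assoc)
    show "(\<lambda>u. u + t) ` {u \<in> A. g u = 0} \<subseteq> {u \<in> A. g u = 1}"
      using t clos add by auto
    show "(\<lambda>u. u + t) ` {u \<in> A. g u = 1} \<subseteq> {u \<in> A. g u = 0}"
      using t clos add add_self_char2[OF two, of 1] by auto
  qed
  then show "card {u\<in>A. g u = 0} = card {u\<in>A. g u = 1}" by (rule bij_betw_same_card)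
  have "A = {u\<in>A. g u = 0} \<union> {u\<in>A. g u = 1}" using v01 by auto
  moreover have "{u\<in>A. g u = 0} \<inter> {u\<in>A. g u = 1} = {}" by auto
  ultimately show "card {u\<in>A. g u = 0} + card {u\<in>A. g u = 1} = card A"
    using fin by (metis (no_types, lifting) card_Un_disjoint finite_Un)
qed

locale qsetup =
  fixes r m :: nat and D :: "'a::{field,finite} set"
  assumes r3: "r \<ge> 3" and mdef: "m = 2 * r" and cardU: "card (UNIV :: 'a set) = 2 ^ m"
    and Ddef: "D = {x. tr r (x ^ (2 ^ r + 1)) = 0}"
begin

abbreviation q :: nat where "q \<equiv> 2 ^ r"

definition Q :: "'a \<Rightarrow> 'a" where "Q x = tr r (x ^ (q + 1))"
definition Bf :: "'a \<Rightarrow> 'a \<Rightarrow> 'a" where "Bf x y = tr m (x ^ q * y)"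

lemma two: "(2::'a) = 0"
  using char2[where 'a='a] cardU mdef r3 by simp

lemma qq: "q * q = 2 ^ m"
  using mdef by (simp add: power_add[symmetric] mult_2)

lemma frob_m: "x ^ (2 ^ m) = (x::'a)"
  using fermat[of x] cardU by simp

lemma frob_qq: "x ^ (q * q) = (x::'a)"
  using frob_m qq by simp

lemma addq: "(x + y) ^ q = x ^ q + (y::'a) ^ q"
  using pow2_add_char2[OF two] by simp

lemma tr_split: "tr (r + k) z = tr r z + tr k (z ^ q)"
proof (induction k)
  case 0 then show ?case by (simp add: tr_def)
next
  case (Suc k)
  have "tr (r + Suc k) z = tr (r + k) z + z ^ (2 ^ (r + k))" by (simp add: tr_def)
  moreover have "tr (Suc k) (z ^ q) = tr k (z ^ q) + (z ^ q) ^ (2 ^ k)" by (simp add: tr_def)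
  moreover have "(z ^ q) ^ (2 ^ k) = z ^ (2 ^ (r + k))" by (simp add: power_mult[symmetric] power_add)
  ultimately show ?case using Suc by (simp add: add.assoc)
qed

lemma trm_split: "tr m z = tr r z + tr r (z ^ q)"
  using tr_split[of r z] mdef by (simp add: mult_2)

lemma trm01: "tr m z = 0 \<or> tr m z = (1::'a)"
  using tr_01[OF two frob_m] .

lemma NK: "(x ^ (q + 1)) ^ q = (x::'a) ^ (q + 1)"
proof -
  have "(x ^ (q + 1)) ^ q = x ^ (q * q) * x ^ q"
    by (simp add: power_mult[symmetric] algebra_simps power_add)
  then show ?thesis using frob_qq by (simp add: algebra_simps)
qed

lemma Q01: "Q x = 0 \<or> Q x = 1"
  unfolding Q_def using tr_01[OF two NK] by simp

lemma B01: "Bf x y = 0 \<or> Bf x y = 1"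
  unfolding Bf_def using trm01 by simp

lemma Q0[simp]: "Q 0 = 0" unfolding Q_def by (simp add: power_0_left)
lemma B0l[simp]: "Bf 0 y = 0" unfolding Bf_def by (simp add: power_0_left)
lemma B0r[simp]: "Bf x 0 = 0" unfolding Bf_def by simp

lemma Qadd: "Q (x + y) = Q x + Q y + Bf x y"
proof -
  have "(x + y) ^ (q + 1) = (x ^ q + y ^ q) * (x + y)" using addq by simp
  also have "\<dots> = x ^ (q + 1) + y ^ (q + 1) + (x ^ q * y + (x ^ q * y) ^ q)"
  proof -
    have "(x ^ q * y) ^ q = (x ^ q) ^ q * y ^ q" by (simp add: power_mult_distrib)
    moreover have "(x ^ q) ^ q = x" by (metis frob_qq power_mult)
    ultimately have h: "(x ^ q * y) ^ q = x * y ^ q" by simp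
    show ?thesis unfolding h by (simp add: algebra_simps)
  qed
  finally have "(x + y) ^ (q + 1) = x ^ (q + 1) + y ^ (q + 1) + (x ^ q * y + (x ^ q * y) ^ q)" .
  then show ?thesis unfolding Q_def Bf_def using trm_split[of "x ^ q * y"] tr_add[OF two] by simp
qed

lemma Bsym: "Bf x y = Bf y x"
proof -
  have "Q (x + y) = Q (y + x)" by (simp add: add.commute)
  then show ?thesis using Qadd[of x y] Qadd[of y x] by (simp add: algebra_simps)
qed

lemma Badd2: "Bf x (y + z) = Bf x y + Bf x z"
  unfolding Bf_def by (simp add: distrib_left tr_add[OF two])

lemma Badd1: "Bf (x + y) z = Bf x z + Bf y z"
  using Badd2 Bsym by metis

lemma Bself: "Bf x x = 0"
proof -
  have "x + x = 0" by (rule add_self_char2[OF two])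
  then have "Q (x + x) = 0" by (metis Q0)
  then show ?thesis using Qadd[of x x] add_self_char2[OF two, of "Q x"] by simp
qed

lemma m_ge: "m \<ge> 6" using mdef r3 by simp

lemma ex_tr1: "\<exists>t::'a. tr m t = 1"
proof (rule ccontr)
  assume "\<not> ?thesis"
  then have "{x::'a. tr m x = 0} = UNIV" using trm01 by auto
  moreover have "card {x::'a. tr m x = 0} \<le> 2 ^ (m - 1)"
    using card_tr_roots_le[where 'a='a, of m] m_ge by simp
  moreover have "(2::nat) ^ (m - 1) < 2 ^ m" using m_ge by simp
  ultimately show False using cardU m_ge by simp
qed

lemma half_B:
  assumes "c \<noteq> 0"
  shows "card {u. Bf c u = 0} = 2 ^ (m - 1)" "card {u. Bf c u = 1} = 2 ^ (m - 1)"
proof -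
  obtain t0 where t0: "tr m t0 = (1::'a)" using ex_tr1 by blast
  have cq: "c ^ q \<noteq> 0" using assms by simp
  define t where "t = t0 / c ^ q"
  have "Bf c t = 1" unfolding Bf_def t_def using cq t0 by simp
  note h = half_count[where A=UNIV and g="Bf c" and t=t, OF _ two Badd2 B01 _ _ this, simplified]
  have "card {u. Bf c u = 0} + card {u. Bf c u = 0} = 2 ^ m" using h cardU by simp
  moreover have "(2::nat) ^ m = 2 ^ (m - 1) + 2 ^ (m - 1)" using m_ge
    by (metis Suc_diff_1 mult_2 order_less_le_trans power_Suc zero_less_numeral mult_2[symmetric] le_add_diff_inverse2 less_Suc_eq_0_disj linorder_not_le)
  ultimately show "card {u. Bf c u = 0} = 2 ^ (m - 1)" "card {u. Bf c u = 1} = 2 ^ (m - 1)"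
    using h by auto
qed

end

lemma nat_prod_eq:
  fixes a b A B :: nat
  assumes "a \<le> A" "b \<le> B" "a * b = A * B" "A * B > 0"
  shows "a = A" "b = B"
proof -
  have A0: "A > 0" "B > 0" using assms(4) by auto
  have "a * b \<le> A * b" using assms(1) by (rule mult_le_mono1)
  moreover have "A * b \<le> A * B" using assms(2) by (rule mult_le_mono2)
  ultimately have "A * b = A * B" using assms(3) by linarith
  then show "b = B" using A0 by simp
  then show "a = A" using assms(3) A0 by simp
qed

context qsetup
begin

definition ker :: "'a set" where "ker = {x. x ^ (q + 1) = 1}"
definition Rs :: "'a set" where "Rs = {y. y ^ (q - 1) = 1}"
definition fib :: "'a \<Rightarrow> 'a set" where "fib y = {x. x ^ (q + 1) = y}"
definition K :: "'a set" where "K = {y. y ^ q = y}"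

lemma q_ge: "q \<ge> 8"
proof -
  have "(2::nat) ^ 3 \<le> 2 ^ r" using r3 by (rule power_increasing) simp
  then show ?thesis by simp
qed

lemma qq1: "(q + 1) * (q - 1) = q * q - 1"
proof -
  obtain p where "q = Suc p" using q_ge by (metis not0_implies_Suc not_numeral_le_zero)
  then show ?thesis by (simp add: algebra_simps)
qed

lemma pow_qq1: assumes "x \<noteq> (0::'a)" shows "x ^ (q * q - 1) = 1"
proof -
  have "q * q \<ge> 1" using q_ge by simp
  then have "x ^ (q * q) = x * x ^ (q * q - 1)"
    by (metis Suc_diff_1 less_le_trans power_Suc zero_less_one)
  then show ?thesis using frob_qq[of x] assms by simp
qed

lemma card_ker_le: "card ker \<le> q + 1"
  unfolding ker_def by (rule card_pow_eq_le) simp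

lemma card_Rs_le: "card Rs \<le> q - 1"
  unfolding Rs_def by (rule card_pow_eq_le) (use q_ge in simp)

lemma norm_in_Rs: assumes "x \<noteq> 0" shows "x ^ (q + 1) \<in> Rs"
proof -
  have "(x ^ (q + 1)) ^ (q - 1) = x ^ (q * q - 1)" by (metis power_mult qq1)
  then show ?thesis unfolding Rs_def using pow_qq1[OF assms] by simp
qed

lemma fib_eq:
  assumes "x0 ^ (q + 1) = y" "x0 \<noteq> 0"
  shows "fib y = (\<lambda>k. x0 * k) ` ker" "card (fib y) = card ker"
proof -
  show e: "fib y = (\<lambda>k. x0 * k) ` ker"
  proof
    show "fib y \<subseteq> (\<lambda>k. x0 * k) ` ker"
    proof
      fix x assume "x \<in> fib y"
      then have "x ^ (q + 1) = y" by (simp add: fib_def)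
      moreover have "y \<noteq> 0" using assms by auto
      ultimately have "(x / x0) ^ (q + 1) = 1" using assms by (simp add: power_divide)
      moreover have "x = x0 * (x / x0)" using assms by simp
      ultimately show "x \<in> (\<lambda>k. x0 * k) ` ker" unfolding ker_def by blast
    qed
    show "(\<lambda>k. x0 * k) ` ker \<subseteq> fib y"
      using assms unfolding ker_def fib_def by (auto simp: power_mult_distrib)
  qed
  have "inj_on (\<lambda>k. x0 * k) ker" using assms by (auto simp: inj_on_def)
  then show "card (fib y) = card ker" using e card_image by metis
qed

lemma norm_counts: "card ker = q + 1" "(\<lambda>x. x ^ (q + 1)) ` (UNIV - {0}) = Rs" "card Rs = q - 1"
proof -
  define Im where "Im = (\<lambda>x::'a. x ^ (q + 1)) ` (UNIV - {0})"
  have Im_sub: "Im \<subseteq> Rs" unfolding Im_def using norm_in_Rs by auto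
  have un: "UNIV - {0} = (\<Union>y\<in>Im. fib y)" unfolding Im_def fib_def by auto
  have "card (UNIV - {0::'a}) = (\<Sum>y\<in>Im. card (fib y))"
    unfolding un by (rule card_UN_disjoint) (auto simp: fib_def)
  also have "\<dots> = (\<Sum>y\<in>Im. card ker)"
    by (rule sum.cong) (auto simp: Im_def intro: fib_eq(2))
  also have "\<dots> = card Im * card ker" by simp
  finally have e: "card Im * card ker = q * q - 1"
    using cardU qq by (simp add: card_Diff_singleton)
  have "card Im \<le> q - 1" using card_Rs_le card_mono[OF _ Im_sub] by (meson finite order.trans)
  have e': "card Im * card ker = (q - 1) * (q + 1)" using e qq1 by (simp add: mult.commute)
  have qpos: "(q - 1) * (q + 1) > 0" using q_ge by simp
  note np = nat_prod_eq[OF \<open>card Im \<le> q - 1\<close> card_ker_le e' qpos]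
  show "card ker = q + 1" using np(2) qpos by simp
  have "card Im = q - 1" using np(1) qpos by simp
  then have "card Rs \<le> card Im" using card_Rs_le by simp
  then have "Im = Rs" using Im_sub card_subset_eq by (metis antisym card_mono finite)
  then show "(\<lambda>x. x ^ (q + 1)) ` (UNIV - {0}) = Rs" unfolding Im_def by simp
  show "card Rs = q - 1" using \<open>card Im = q - 1\<close> \<open>Im = Rs\<close> by simp
qed

end

context qsetup
begin

lemma q_eq: "q = 2 * 2 ^ (r - 1)"
  using r3 by (metis Suc_diff_1 le_trans not_less_eq_eq numeral_3_eq_3 power_Suc zero_less_Suc not_less less_Suc_eq_0_disj) 

lemma K_eq: "K = insert 0 Rs"
proof -
  have "y ^ q = y \<longleftrightarrow> y = 0 \<or> y ^ (q - 1) = 1" for y :: 'a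
  proof -
    have "y ^ q = y * y ^ (q - 1)" using q_ge
      by (metis Suc_diff_1 le_trans numeral_le_one_iff power_Suc semiring_norm(69) not_less_eq_eq zero_less_numeral less_le_trans zero_less_power)
    then show ?thesis using q_ge by (cases "y = 0") (auto simp: power_0_left)
  qed
  then show ?thesis unfolding K_def Rs_def by auto
qed

lemma zero_notin_Rs: "0 \<notin> Rs" unfolding Rs_def using q_ge by (simp add: power_0_left)

lemma card_K: "card K = q"
proof -
  note zero_notin_Rs
  then show ?thesis using K_eq norm_counts(3) q_ge by simp
qed

lemma K_add: "x \<in> K \<Longrightarrow> y \<in> K \<Longrightarrow> x + y \<in> K"
  unfolding K_def using addq by simp

lemma tr_K01: "y \<in> K \<Longrightarrow> tr r y = 0 \<or> tr r y = 1"
  unfolding K_def by (rule tr_01[OF two]) simp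

lemma card_K_tr0: "card {y\<in>K. tr r y = 0} = 2 ^ (r - 1)"
proof -
  have "\<exists>t\<in>K. tr r t \<noteq> 0"
  proof (rule ccontr)
    assume "\<not> ?thesis"
    then have "K \<subseteq> {x. tr r x = 0}" by auto
    then have "card K \<le> card {x::'a. tr r x = 0}" by (rule card_mono[OF finite])
    also have "\<dots> \<le> 2 ^ (r - 1)" using card_tr_roots_le[where 'a='a, of r] r3 by simp
    finally show False using card_K q_eq by simp
  qed
  then obtain t where t: "t \<in> K" "tr r t = 1" using tr_K01 by blast
  note h = half_count[where A=K and g="tr r", OF finite two tr_add[OF two] tr_K01 K_add t]
  then show ?thesis using card_K q_eq by simp
qed

lemma D_eq: "D = insert 0 (\<Union>y\<in>{y\<in>Rs. tr r y = 0}. fib y)"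
proof -
  have "x \<in> D \<longleftrightarrow> x = 0 \<or> (\<exists>y\<in>{y\<in>Rs. tr r y = 0}. x \<in> fib y)" for x
  proof (cases "x = 0")
    case True
    have "x \<in> D" unfolding Ddef True by (simp add: power_0_left)
    then show ?thesis using True by simp
  next
    case False
    then show ?thesis unfolding Ddef fib_def using norm_in_Rs[OF False] by auto
  qed
  then show ?thesis by auto
qed

lemma card_D: "card D = 2 ^ (r - 1) * (2 ^ r - 1)"
proof -
  define Z0 where "Z0 = {y\<in>Rs. tr r y = 0}"
  have Z0: "Z0 = {y\<in>K. tr r y = 0} - {0}" unfolding Z0_def K_eq using zero_notin_Rs by auto
  have "0 \<in> {y\<in>K. tr r y = 0}" unfolding K_def using q_ge by (simp add: power_0_left)
  then have cZ: "card Z0 = 2 ^ (r - 1) - 1" unfolding Z0 using card_K_tr0 by (simp add: card_Diff_singleton)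
  have fy: "y \<in> Z0 \<Longrightarrow> card (fib y) = q + 1" for y
  proof -
    assume "y \<in> Z0"
    then have "y \<in> (\<lambda>x. x ^ (q + 1)) ` (UNIV - {0})" using norm_counts(2) unfolding Z0_def by auto
    then obtain x0 where "x0 \<noteq> 0" "x0 ^ (q + 1) = y" by auto
    then show ?thesis using fib_eq(2) norm_counts(1) by metis
  qed
  have "0 \<notin> (\<Union>y\<in>Z0. fib y)" unfolding Z0_def fib_def Rs_def using q_ge by (auto simp: power_0_left)
  then have "card D = Suc (card (\<Union>y\<in>Z0. fib y))" unfolding D_eq Z0_def[symmetric] by simp
  also have "card (\<Union>y\<in>Z0. fib y) = (\<Sum>y\<in>Z0. card (fib y))"
    by (rule card_UN_disjoint) (auto simp: fib_def)
  also have "\<dots> = card Z0 * (q + 1)" using fy by simp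
  finally have e: "card D = Suc ((2 ^ (r - 1) - 1) * (2 * 2 ^ (r - 1) + 1))" using cZ q_eq by simp
  obtain p where p: "(2::nat) ^ (r - 1) = Suc p" by (metis not0_implies_Suc power_not_zero zero_neq_numeral)
  have "(2::nat) ^ r - 1 = 2 * 2 ^ (r - 1) - 1" using q_eq by simp
  then show ?thesis unfolding e using p by (simp add: algebra_simps)
qed

end

context qsetup
begin

lemma D_Q: "D = {x. Q x = 0}"
  unfolding Ddef Q_def by simp

lemma m2: "(2::nat) ^ (m - 1) = 2 * 2 ^ (m - 2)"
proof -
  have "m - 1 = Suc (m - 2)" using m_ge by simp
  then show ?thesis by simp
qed

lemma sum01_iff:
  fixes a b :: 'a
  assumes "a = 0 \<or> a = 1" "b = 0 \<or> b = 1"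
  shows "a + b = 0 \<longleftrightarrow> a = b"
  using eq_iff_add_char2[OF two] .

lemma sum01_iff':
  fixes a b :: 'a
  assumes "a = 0 \<or> a = 1" "b = 0 \<or> b = 1"
  shows "a + 1 + b = 0 \<longleftrightarrow> a \<noteq> b"
proof -
  have o: "(1::'a) + 1 = 0" by (rule add_self_char2[OF two])
  from assms show ?thesis
  proof (elim disjE)
    assume "a = 1" "b = 1" then show ?thesis using o by (simp add: add.assoc)
  qed (use o in simp_all)
qed

lemma N_counts:
  assumes c: "c \<noteq> 0"
  shows "Q c = 0 \<Longrightarrow> card {x\<in>D. Bf c x = 1} = 2 ^ (m - 2) \<and> card {x\<in>D. Bf c x = 0} + 2 ^ (m - 2) = card D"
    and "Q c = 1 \<Longrightarrow> card {x\<in>D. Bf c x = 0} = 2 ^ (m - 2) \<and> card {x\<in>D. Bf c x = 1} + 2 ^ (m - 2) = card D"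
proof -
  define S where "S i j = {x. Q x = i \<and> Bf c x = j}" for i j
  have fS: "finite (S i j)" for i j by simp
  have dis: "i \<noteq> k \<or> j \<noteq> l \<Longrightarrow> S i j \<inter> S k l = {}" for i j k l unfolding S_def by auto
  have cD: "card (S 0 0) + card (S 0 1) = card D"
  proof -
    have "D = S 0 0 \<union> S 0 1" unfolding D_Q S_def using B01 by auto
    then show ?thesis using dis[where i=0 and j=0 and k=0 and l=1] by (simp add: card_Un_disjoint)
  qed
  have cB0: "card (S 0 0) + card (S 1 0) = 2 * 2 ^ (m - 2)"
  proof -
    have "{u. Bf c u = 0} = S 0 0 \<union> S 1 0" unfolding S_def using Q01 by auto
    then show ?thesis using dis[where i=0 and j=0 and k=1 and l=0] half_B(1)[OF c] m2 by (simp add: card_Un_disjoint)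
  qed
  have cB1: "card (S 0 1) + card (S 1 1) = 2 * 2 ^ (m - 2)"
  proof -
    have "{u. Bf c u = 1} = S 0 1 \<union> S 1 1" unfolding S_def using Q01 by auto
    then show ?thesis using dis[where i=0 and j=1 and k=1 and l=1] half_B(2)[OF c] m2 by (simp add: card_Un_disjoint)
  qed
  have tr: "card {x. Q (x + c) = 0} = card D"
  proof -
    have "bij_betw (\<lambda>x. x + c) {x. Q (x + c) = 0} D"
    proof (rule bij_betw_byWitness[where f'="\<lambda>x. x + c"])
      show "\<forall>a\<in>{x. Q (x + c) = 0}. a + c + c = a" using add_self_char2[OF two, of c] by (simp add: add.assoc)
      show "\<forall>a\<in>D. a + c + c = a" using add_self_char2[OF two, of c] by (simp add: add.assoc)
      show "(\<lambda>x. x + c) ` {x. Q (x + c) = 0} \<subseteq> D" unfolding D_Q by auto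
      show "(\<lambda>x. x + c) ` D \<subseteq> {x. Q (x + c) = 0}" unfolding D_Q
        using add_self_char2[OF two, of c] by (auto simp: add.assoc)
    qed
    then show ?thesis by (rule bij_betw_same_card)
  qed
  have Qt: "Q (x + c) = Q x + Q c + Bf c x" for x using Qadd[of x c] Bsym by simp
  show "Q c = 0 \<Longrightarrow> card {x\<in>D. Bf c x = 1} = 2 ^ (m - 2) \<and> card {x\<in>D. Bf c x = 0} + 2 ^ (m - 2) = card D"
  proof -
    assume Qc: "Q c = 0"
    have "x \<in> {x. Q (x + c) = 0} \<longleftrightarrow> x \<in> S 0 0 \<union> S 1 1" for x
      using Q01[of x] B01[of c x] sum01_iff[OF Q01[of x] B01[of c x]] by (auto simp: S_def Qt Qc)
    then have "{x. Q (x + c) = 0} = S 0 0 \<union> S 1 1" by blast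
    then have "card (S 0 0) + card (S 1 1) = card D" using tr dis[where i=0 and j=0 and k=1 and l=1] by (simp add: card_Un_disjoint)
    moreover have "{x\<in>D. Bf c x = 1} = S 0 1" "{x\<in>D. Bf c x = 0} = S 0 0" unfolding D_Q S_def by auto
    ultimately show ?thesis using cD cB1 by simp
  qed
  show "Q c = 1 \<Longrightarrow> card {x\<in>D. Bf c x = 0} = 2 ^ (m - 2) \<and> card {x\<in>D. Bf c x = 1} + 2 ^ (m - 2) = card D"
  proof -
    assume Qc: "Q c = 1"
    have "x \<in> {x. Q (x + c) = 0} \<longleftrightarrow> x \<in> S 0 1 \<union> S 1 0" for x
      using Q01[of x] B01[of c x] sum01_iff'[OF Q01[of x] B01[of c x]] by (auto simp: S_def Qt Qc)
    then have "{x. Q (x + c) = 0} = S 0 1 \<union> S 1 0" by blast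
    then have "card (S 0 1) + card (S 1 0) = card D" using tr dis[where i=0 and j=1 and k=1 and l=0] by (simp add: card_Un_disjoint)
    moreover have "{x\<in>D. Bf c x = 1} = S 0 1" "{x\<in>D. Bf c x = 0} = S 0 0" unfolding D_Q S_def by auto
    ultimately show ?thesis using cD cB0 by simp
  qed
qed

end

context qsetup
begin

abbreviation h :: nat where "h \<equiv> 2 ^ (r - 1)"
abbreviation HH :: nat where "HH \<equiv> 2 ^ (m - 2)"
abbreviation kap :: nat where "kap \<equiv> card D - HH"

lemma h_ge: "h \<ge> 4"
proof -
  have "(2::nat) ^ 2 \<le> 2 ^ (r - 1)" using r3 by (intro power_increasing) auto
  then show ?thesis by simp
qed

lemma HH_eq: "HH = h * h"
proof -
  have "m - 2 = (r - 1) + (r - 1)" using mdef r3 by simp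
  then show ?thesis by (simp add: power_add)
qed

lemma cardD_h: "card D = h * (2 * h - 1)"
  using card_D q_eq by simp

lemma kap_eq: "kap = h * (h - 1)"
proof -
  obtain p where p: "h = Suc p" using h_ge by (metis Suc_pred' less_le_trans numeral_less_iff zero_less_numeral semiring_norm(76) less_numeral_extra(1) le_eq_less_or_eq)
  show ?thesis unfolding cardD_h HH_eq p by (simp add: algebra_simps)
qed

lemma nums: "0 < kap" "kap < HH" "HH < card D" "kap < card D" "kap \<ge> 12"
proof -
  obtain p where p: "h = p + 4" using h_ge by (metis add.commute le_add_diff_inverse)
  show "0 < kap" "kap < HH" "HH < card D" "kap < card D" "kap \<ge> 12"
    unfolding kap_eq HH_eq cardD_h p by (simp_all add: algebra_simps)
qed

end

context qsetup
begin

definition encB :: "'a \<Rightarrow> 'a \<Rightarrow> 'a \<Rightarrow> 'a" where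
  "encB u c = (\<lambda>x. if x \<in> D then Bf u x + c else 0)"

lemma one_one: "(1::'a) + 1 = 0" by (rule add_self_char2[OF two])

lemma supp_encB0: "supp D (encB u 0) = {x\<in>D. Bf u x = 1}"
  unfolding supp_def encB_def using B01 by auto

lemma supp_encB1: "supp D (encB u 1) = {x\<in>D. Bf u x = 0}"
proof -
  have "Bf u x + 1 \<noteq> 0 \<longleftrightarrow> Bf u x = 0" for x using B01[of u x] one_one by auto
  then show ?thesis unfolding supp_def encB_def by auto
qed

lemma D0: "0 \<in> D" unfolding D_Q by simp

lemma wt_encB:
  "wt D (encB 0 0) = 0"
  "wt D (encB 0 1) = card D"
  "u \<noteq> 0 \<Longrightarrow> Q u = 0 \<Longrightarrow> wt D (encB u 0) = HH"
  "u \<noteq> 0 \<Longrightarrow> Q u = 0 \<Longrightarrow> wt D (encB u 1) = kap"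
  "u \<noteq> 0 \<Longrightarrow> Q u = 1 \<Longrightarrow> wt D (encB u 0) = kap"
  "u \<noteq> 0 \<Longrightarrow> Q u = 1 \<Longrightarrow> wt D (encB u 1) = HH"
  unfolding wt_def supp_encB0 supp_encB1
  using N_counts[of u] by auto

lemma wt_encB_pos: "u \<noteq> 0 \<Longrightarrow> c \<in> {0, 1} \<Longrightarrow> wt D (encB u c) \<in> {kap, HH}"
  using Q01[of u] wt_encB(3-6)[of u] by auto

lemma wt_zero: "wt D (\<lambda>_. (0::'a)) = 0" unfolding wt_def supp_def by simp

lemma encB_inj:
  assumes "c \<in> {0, 1}" "c' \<in> {0, 1}" "encB u c = encB u' c'"
  shows "u = u' \<and> c = c'"
proof -
  have cc: "c + c' \<in> {0, 1}" using assms(1,2) one_one by auto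
  have "encB (u + u') (c + c') = (\<lambda>_. 0)"
  proof
    fix x
    show "encB (u + u') (c + c') x = 0"
    proof (cases "x \<in> D")
      case True
      then have "Bf u x + c = Bf u' x + c'" using assms(3) unfolding encB_def by (metis (no_types, lifting))
      then have "Bf u x + c + (Bf u' x + c') = 0" by (metis add_self_char2[OF two])
      then show ?thesis using True unfolding encB_def Badd1 by (simp add: algebra_simps)
    qed (simp add: encB_def)
  qed
  then have w: "wt D (encB (u + u') (c + c')) = 0" using wt_zero by simp
  have "u + u' = 0"
  proof (rule ccontr)
    assume "u + u' \<noteq> 0"
    then have "wt D (encB (u + u') (c + c')) \<in> {kap, HH}" using wt_encB_pos[OF _ cc] by blast
    then show False using w nums by auto
  qed
  then have uu: "u = u'" using eq_iff_add_char2[OF two] by blast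
  have "encB u c 0 = encB u' c' 0" using assms(3) by simp
  then have "c = c'" using D0 unfolding encB_def by simp
  then show ?thesis using uu by simp
qed

definition Cset :: "('a \<Rightarrow> 'a) set" where
  "Cset = {(\<lambda>x. if x \<in> D then tr m (b * x) + c else 0) | b c. c \<in> {0, 1}}"

lemma qq_inv: "(u ^ q) ^ q = (u::'a)" by (metis frob_qq power_mult)

lemma Cset_eq: "Cset = (\<lambda>(u, c). encB u c) ` (UNIV \<times> {0, 1})"
proof -
  have e: "(\<lambda>x. if x \<in> D then tr m (b * x) + c else 0) = encB (b ^ q) c" for b c
    unfolding encB_def Bf_def qq_inv by simp
  show ?thesis unfolding Cset_def e
  proof (intro equalityI subsetI)
    fix w assume "w \<in> {encB (b ^ q) c |b c. c \<in> {0, 1}}"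
    then obtain b c where "w = encB (b ^ q) c" "c \<in> {0, 1}" by blast
    then show "w \<in> (\<lambda>(u, c). encB u c) ` (UNIV \<times> {0, 1})" by force
  next
    fix w assume "w \<in> (\<lambda>(u, c). encB u c) ` (UNIV \<times> {0, 1})"
    then obtain u c where "w = encB u c" "c \<in> {0, 1}" by auto
    then have "w = encB ((u ^ q) ^ q) c" "c \<in> {0,1}" by (simp_all only: qq_inv)
    then show "w \<in> {encB (b ^ q) c |b c. c \<in> {0, 1}}" by blast
  qed
qed

lemma encB_inj_on: "inj_on (\<lambda>(u, c). encB u c) (UNIV \<times> {0, 1})"
proof (rule inj_onI)
  fix p p' :: "'a \<times> 'a"
  assume "p \<in> UNIV \<times> {0, 1}" "p' \<in> UNIV \<times> {0, 1}" "(\<lambda>(u, c). encB u c) p = (\<lambda>(u, c). encB u c) p'"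
  then show "p = p'" using encB_inj[of "snd p" "snd p'" "fst p" "fst p'"]
    by (simp add: case_prod_beta prod_eq_iff mem_Times_iff)
qed

lemma card_Cset: "card Cset = 2 ^ (m + 1)"
proof -
  have "card Cset = card ((UNIV::'a set) \<times> {0::'a, 1})" unfolding Cset_eq by (rule card_image[OF encB_inj_on])
  also have "\<dots> = 2 ^ m * 2" using cardU by (simp add: card_cartesian_product)
  finally show ?thesis by simp
qed

end

context qsetup
begin

lemma sum01_one:
  fixes a b :: 'a
  assumes "a = 0 \<or> a = 1" "b = 0 \<or> b = 1"
  shows "a + b = 1 \<longleftrightarrow> a \<noteq> b"
  using assms one_one by auto

lemma cardD_kap: "card D = kap + HH" using nums by simp

lemma P11:
  assumes "x \<noteq> 0" "y \<noteq> 0" "x \<noteq> y"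
  shows "card {u. Bf x u = 1 \<and> Bf y u = 1} = HH"
proof -
  define A where "A i j = {u. Bf x u = i \<and> Bf y u = j}" for i j
  have xy: "x + y \<noteq> 0" using assms(3) eq_iff_add_char2[OF two] by blast
  have dis: "i \<noteq> k \<or> j \<noteq> l \<Longrightarrow> A i j \<inter> A k l = {}" for i j k l unfolding A_def by auto
  have e1: "{u. Bf x u = 1} = A 1 1 \<union> A 1 0" unfolding A_def using B01 by auto
  have e2: "{u. Bf y u = 1} = A 1 1 \<union> A 0 1" unfolding A_def using B01 by auto
  have e3: "{u. Bf (x + y) u = 1} = A 1 0 \<union> A 0 1"
  proof -
    have "Bf (x + y) u = 1 \<longleftrightarrow> u \<in> A 1 0 \<union> A 0 1" for u
      unfolding Badd1 sum01_one[OF B01 B01] A_def using B01[of x u] B01[of y u] by auto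
    then show ?thesis by blast
  qed
  have "card (A 1 1) + card (A 1 0) = 2 * HH"
    using half_B(2)[OF assms(1)] m2 e1 dis[where i=1 and j=1 and k=1 and l=0] by (simp add: card_Un_disjoint)
  moreover have "card (A 1 1) + card (A 0 1) = 2 * HH"
    using half_B(2)[OF assms(2)] m2 e2 dis[where i=1 and j=1 and k=0 and l=1] by (simp add: card_Un_disjoint)
  moreover have "card (A 1 0) + card (A 0 1) = 2 * HH"
    using half_B(2)[OF xy] m2 e3 dis[where i=1 and j=0 and k=0 and l=1] by (simp add: card_Un_disjoint)
  ultimately have "card (A 1 1) = HH" by linarith
  then show ?thesis unfolding A_def .
qed

lemma pair_count0:
  assumes "y \<in> D" "y \<noteq> 0"
  shows "card {u. Q u = 1 \<and> Bf 0 u = 1 \<and> Bf y u = 1} + card {u. u \<noteq> 0 \<and> Q u = 0 \<and> Bf 0 u = 0 \<and> Bf y u = 0} = kap - 1"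
proof -
  have Qy: "Q y = 0" using assms(1) D_Q by simp
  have "{u. Q u = 1 \<and> Bf 0 u = 1 \<and> Bf y u = 1} = {}" by simp
  moreover have "{u. u \<noteq> 0 \<and> Q u = 0 \<and> Bf 0 u = 0 \<and> Bf y u = 0} = {u\<in>D. Bf y u = 0} - {0}"
    unfolding D_Q by auto
  moreover have "0 \<in> {u\<in>D. Bf y u = 0}" using D0 by simp
  moreover have "card {u\<in>D. Bf y u = 0} = kap" using N_counts(1)[OF assms(2) Qy, THEN conjunct2] by linarith
  ultimately show ?thesis by (simp add: card_Diff_singleton)
qed

lemma pair_count:
  assumes "x \<in> D" "y \<in> D" "x \<noteq> y"
  shows "card {u. Q u = 1 \<and> Bf x u = 1 \<and> Bf y u = 1} + card {u. u \<noteq> 0 \<and> Q u = 0 \<and> Bf x u = 0 \<and> Bf y u = 0} = kap - 1"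
proof (cases "x = 0")
  case True then show ?thesis using pair_count0[OF assms(2)] assms(3) by simp
next
  case xn: False
  show ?thesis
  proof (cases "y = 0")
    case True
    have "{u. Q u = 1 \<and> Bf x u = 1 \<and> Bf y u = 1} = {u. Q u = 1 \<and> Bf 0 u = 1 \<and> Bf x u = 1}"
      "{u. u \<noteq> 0 \<and> Q u = 0 \<and> Bf x u = 0 \<and> Bf y u = 0} = {u. u \<noteq> 0 \<and> Q u = 0 \<and> Bf 0 u = 0 \<and> Bf x u = 0}"
      using True by auto
    then show ?thesis using pair_count0[OF assms(1) xn] by simp
  next
    case yn: False
    have Qx: "Q x = 0" "Q y = 0" using assms D_Q by auto
    define E where "E i j = {u\<in>D. Bf x u = i \<and> Bf y u = j}" for i j
    have dis: "i \<noteq> k \<or> j \<noteq> l \<Longrightarrow> E i j \<inter> E k l = {}" for i j k l unfolding E_def by auto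
    have "{u\<in>D. Bf x u = 0} = E 0 0 \<union> E 0 1" unfolding E_def using B01 by auto
    then have c1: "card (E 0 0) + card (E 0 1) = kap"
      using N_counts(1)[OF xn Qx(1), THEN conjunct2] dis[where i=0 and j=0 and k=0 and l=1] by (simp add: card_Un_disjoint)
    have "{u\<in>D. Bf y u = 1} = E 0 1 \<union> E 1 1" unfolding E_def using B01 by auto
    then have c2: "card (E 0 1) + card (E 1 1) = HH"
      using N_counts(1)[OF yn Qx(2), THEN conjunct1] dis[where i=0 and j=1 and k=1 and l=1] by (simp add: card_Un_disjoint)
    have s1: "{u. Q u = 1 \<and> Bf x u = 1 \<and> Bf y u = 1} = {u. Bf x u = 1 \<and> Bf y u = 1} - E 1 1"
      unfolding E_def D_Q using Q01 by auto
    have "E 1 1 \<subseteq> {u. Bf x u = 1 \<and> Bf y u = 1}" unfolding E_def by auto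
    then have k1: "card {u. Q u = 1 \<and> Bf x u = 1 \<and> Bf y u = 1} = HH - card (E 1 1)"
      unfolding s1 using P11[OF xn yn assms(3)] by (simp add: card_Diff_subset)
    have s2: "{u. u \<noteq> 0 \<and> Q u = 0 \<and> Bf x u = 0 \<and> Bf y u = 0} = E 0 0 - {0}"
      unfolding E_def D_Q by auto
    have "0 \<in> E 0 0" unfolding E_def using D0 by simp
    then have k2: "card {u. u \<noteq> 0 \<and> Q u = 0 \<and> Bf x u = 0 \<and> Bf y u = 0} = card (E 0 0) - 1"
      unfolding s2 by (simp add: card_Diff_singleton)
    have "card (E 0 0) \<ge> 1" using \<open>0 \<in> E 0 0\<close> by (metis One_nat_def Suc_leI card_gt_0_iff empty_iff finite)
    then show ?thesis unfolding k1 k2 using c1 c2 by linarith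
  qed
qed

end

context qsetup
begin

lemma encB00: "encB 0 0 = (\<lambda>_. 0)" unfolding encB_def by auto

lemma kap_stmt: "kap = 2^(r-1) * (2^(r-1) - 1)" using kap_eq by simp
lemma HH_stmt: "HH = 2^(2*r-2)" using mdef by simp

lemma wenum: "weight_enum D Cset = 1 + monom (2^(2*r) - 1) (2^(r-1) * (2^(r-1) - 1))
                          + monom (2^(2*r) - 1) (2^(2*r-2))
                          + monom 1 (2^(r-1) * (2^r - 1))"
proof -
  define g where "g u = (monom 1 (wt D (encB u 0)) + monom 1 (wt D (encB u 1)) :: int poly)" for u
  have "weight_enum D Cset = (\<Sum>p\<in>(UNIV::'a set) \<times> {0, 1}. monom 1 (wt D ((\<lambda>(u, c). encB u c) p)))"
    unfolding weight_enum_def Cset_eq by (rule sum.reindex[OF encB_inj_on, unfolded comp_def])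
  also have "\<dots> = (\<Sum>u\<in>UNIV. \<Sum>c\<in>{0::'a, 1}. monom 1 (wt D (encB u c)))"
    unfolding sum.cartesian_product by (rule sum.cong) auto
  also have "\<dots> = (\<Sum>u\<in>UNIV. g u)" unfolding g_def by (simp add: add.commute)
  also have "\<dots> = g 0 + (\<Sum>u\<in>UNIV - {0}. g u)" by (rule sum.remove) auto
  also have "(\<Sum>u\<in>UNIV - {0}. g u) = (\<Sum>u\<in>(UNIV::'a set) - {0}. monom 1 kap + monom 1 HH)"
  proof (rule sum.cong)
    fix u assume "u \<in> UNIV - {(0::'a)}"
    then have "u \<noteq> 0" by simp
    then show "g u = monom 1 kap + monom 1 HH"
      unfolding g_def using Q01[of u] wt_encB(3-6)[of u] by (auto simp: add.commute)
  qed simp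
  also have "\<dots> = of_nat (2 ^ m - 1) * (monom 1 kap + monom 1 HH)"
    using cardU by (simp add: card_Diff_singleton)
  also have "\<dots> = monom (2^(2*r) - 1) kap + monom (2^(2*r) - 1) HH"
  proof -
    have "(of_nat (2 ^ m - 1) :: int) = 2^(2*r) - 1" using mdef by (simp add: of_nat_diff)
    then have "(of_nat (2 ^ m - 1) :: int poly) = monom (2^(2*r) - 1) 0"
      by (metis of_nat_monom of_int_of_nat_eq)
    then show ?thesis by (simp add: distrib_left mult_monom)
  qed
  also have "g 0 = 1 + monom 1 (card D)" unfolding g_def using wt_encB(1,2) by (simp add: one_pCons monom_0)
  finally have eq0: "weight_enum D Cset = 1 + monom 1 (card D) + (monom (2^(2*r) - 1) kap + monom (2^(2*r) - 1) HH)" .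
  have eq: "weight_enum D Cset = 1 + monom 1 nD + (monom (2^(2*r) - 1) kD + monom (2^(2*r) - 1) hD)"
    if "card D = nD" "kap = kD" "HH = hD" for nD kD hD using eq0 that by simp
  show ?thesis using eq[OF card_D kap_stmt HH_stmt] by (simp only: add.assoc add.commute add.left_commute)
qed

end

context qsetup
begin

lemma Cset_mem: "w \<in> Cset \<longleftrightarrow> (\<exists>u c. c \<in> {0, 1} \<and> w = encB u c)"
  unfolding Cset_eq by auto

lemma encB_ne0: "c \<in> {0, 1} \<Longrightarrow> encB u c \<noteq> (\<lambda>_. 0) \<longleftrightarrow> \<not> (u = 0 \<and> c = 0)"
proof
  assume "c \<in> {0, 1}" "encB u c \<noteq> (\<lambda>_. 0)"
  then show "\<not> (u = 0 \<and> c = 0)" using encB00 by auto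
next
  assume c: "c \<in> {0, 1}" "\<not> (u = 0 \<and> c = 0)"
  show "encB u c \<noteq> (\<lambda>_. 0)"
  proof
    assume "encB u c = (\<lambda>_. 0)"
    then have "encB u c = encB 0 0" using encB00 by simp
    then show False using encB_inj[of c 0 u 0] c by simp
  qed
qed

lemma mindist_C: "min_dist D Cset = kap"
proof -
  define A where "A = {wt D c | c. c \<in> Cset \<and> c \<noteq> (\<lambda>_. 0)}"
  have sub: "A \<subseteq> {kap, HH, card D}"
  proof
    fix a assume "a \<in> A"
    then obtain u c where uc: "c \<in> {0, 1}" "a = wt D (encB u c)" "encB u c \<noteq> (\<lambda>_. 0)"
      unfolding A_def Cset_mem by blast
    show "a \<in> {kap, HH, card D}"
    proof (cases "u = 0")
      case True
      then have "c = 1" using uc encB_ne0 by auto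
      then show ?thesis using uc True wt_encB(2) by simp
    next
      case False
      then show ?thesis using wt_encB_pos[OF False uc(1)] uc by auto
    qed
  qed
  have kin: "kap \<in> A"
  proof -
    have "\<exists>c\<in>{0::'a, 1}. wt D (encB 1 c) = kap" using Q01[of 1] wt_encB(4,5)[of 1] by auto
    then obtain c where c: "c \<in> {0, 1}" "wt D (encB 1 c) = kap" by blast
    then have "encB 1 c \<noteq> (\<lambda>_. 0)" using wt_zero nums by auto
    moreover have "encB 1 c \<in> Cset" using c(1) unfolding Cset_mem by blast
    ultimately show ?thesis unfolding A_def using c(2) by (intro CollectI exI[of _ "encB 1 c"]) simp
  qed
  have "Min A = kap"
  proof (rule Min_eqI)
    show "finite A" using sub by (rule finite_subset) simp
    show "\<And>y. y \<in> A \<Longrightarrow> kap \<le> y" using sub nums by fastforce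
  qed (rule kin)
  then show ?thesis unfolding min_dist_def A_def .
qed

lemma bword_encB: assumes "c \<in> {0, 1}" shows "bword D (encB u c)"
proof -
  have "Bf u x + c \<in> {0, 1}" for x
  proof -
    have "c = 0 \<or> c = 1" using assms by simp
    then show ?thesis using B01[of u x] one_one by (elim disjE) auto
  qed
  then show ?thesis unfolding bword_def encB_def by auto
qed

lemma bword_eq: "bword D v \<Longrightarrow> v = (\<lambda>x. if x \<in> supp D v then 1 else 0)"
proof (rule ext)
  fix x assume b: "bword D v"
  show "v x = (if x \<in> supp D v then 1 else 0)"
  proof (cases "x \<in> D")
    case True then show ?thesis using b unfolding bword_def supp_def by auto
  next
    case False then show ?thesis using b unfolding bword_def supp_def by auto
  qed
qed

lemma supp_inj: "inj_on (supp D) {v :: 'a \<Rightarrow> 'a. bword D v}"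
proof (rule inj_onI)
  fix v w :: "'a \<Rightarrow> 'a" assume "v \<in> {v. bword D v}" "w \<in> {v. bword D v}" "supp D v = supp D w"
  then show "v = w" using bword_eq[of v] bword_eq[of w] by simp
qed

lemma design_C: "holds_design D Cset 2 (card D) kap (kap - 1)"
  unfolding holds_design_def is_design_def
proof (intro conjI allI impI ballI)
  let ?W = "{c \<in> Cset. wt D c = kap}"
  show "finite D" by simp
  show "card D = card D" ..
  show "b \<subseteq> D" "card b = kap" if "b \<in> supp D ` ?W" for b
    using that unfolding supp_def wt_def by auto
  fix T assume T: "T \<subseteq> D \<and> card T = 2"
  then obtain x y where xy: "T = {x, y}" "x \<noteq> y" by (meson card_2_iff)
  have xyD: "x \<in> D" "y \<in> D" using T xy by auto
  define P0 where "P0 = {u. Q u = 1 \<and> Bf x u = 1 \<and> Bf y u = 1}"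
  define P1 where "P1 = {u. u \<noteq> 0 \<and> Q u = 0 \<and> Bf x u = 0 \<and> Bf y u = 0}"
  have wt0: "wt D (encB u 0) = kap \<longleftrightarrow> u \<noteq> 0 \<and> Q u = 1" for u
    using wt_encB(1) wt_encB(3,5)[of u] Q01[of u] nums by (cases "u = 0") auto
  have wt1: "wt D (encB u 1) = kap \<longleftrightarrow> u \<noteq> 0 \<and> Q u = 0" for u
    using wt_encB(2) wt_encB(4,6)[of u] Q01[of u] nums by (cases "u = 0") auto
  have set_eq: "{c \<in> ?W. T \<subseteq> supp D c} = (\<lambda>u. encB u 0) ` P0 \<union> (\<lambda>u. encB u 1) ` P1"
  proof (intro equalityI subsetI)
    fix c assume "c \<in> {c \<in> ?W. T \<subseteq> supp D c}"
    then obtain u g where c: "g \<in> {0, 1}" "c = encB u g" "wt D c = kap" "T \<subseteq> supp D c"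
      unfolding Cset_mem by blast
    show "c \<in> (\<lambda>u. encB u 0) ` P0 \<union> (\<lambda>u. encB u 1) ` P1"
    proof (cases "g = 0")
      case True
      then have "u \<in> P0" using c wt0 xy supp_encB0 Bsym unfolding P0_def by auto
      then have "encB u 0 \<in> (\<lambda>u. encB u 0) ` P0" by (rule imageI)
      then show ?thesis using c True by (intro UnI1) simp
    next
      case False
      then have "g = 1" using c by auto
      then have "u \<in> P1" using c wt1 xy supp_encB1 Bsym unfolding P1_def by auto
      then have "encB u 1 \<in> (\<lambda>u. encB u 1) ` P1" by (rule imageI)
      then show ?thesis using c \<open>g = 1\<close> by (intro UnI2) simp
    qed
  next
    fix c assume "c \<in> (\<lambda>u. encB u 0) ` P0 \<union> (\<lambda>u. encB u 1) ` P1"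
    then consider u where "u \<in> P0" "c = encB u 0" | u where "u \<in> P1" "c = encB u 1" by blast
    then show "c \<in> {c \<in> ?W. T \<subseteq> supp D c}"
    proof cases
      case 1
      then have u0: "u \<noteq> 0" unfolding P0_def by auto
      have "c \<in> Cset" unfolding Cset_mem using 1 by blast
      moreover have "wt D c = kap" using 1 wt0 u0 by (simp add: P0_def)
      moreover have "T \<subseteq> supp D c" using 1 xy xyD by (auto simp: supp_encB0 P0_def Bsym)
      ultimately show ?thesis by simp
    next
      case 2
      have "c \<in> Cset" unfolding Cset_mem using 2 by blast
      moreover have "wt D c = kap" using 2 wt1 by (simp add: P1_def)
      moreover have "T \<subseteq> supp D c" using 2 xy xyD by (auto simp: supp_encB1 P1_def Bsym)
      ultimately show ?thesis by simp
    qed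
  qed
  have inj0: "inj_on (\<lambda>u. encB u 0) P0"
  proof (rule inj_onI)
    fix a b assume "a \<in> P0" "b \<in> P0" "encB a 0 = encB b 0"
    then show "a = b" using encB_inj[of 0 0 a b] by simp
  qed
  have inj1: "inj_on (\<lambda>u. encB u 1) P1"
  proof (rule inj_onI)
    fix a b assume "a \<in> P1" "b \<in> P1" "encB a 1 = encB b 1"
    then show "a = b" using encB_inj[of 1 1 a b] by simp
  qed
  have ne: "encB a 0 \<noteq> encB b 1" for a b using encB_inj[of 0 1 a b] by auto
  have disj: "(\<lambda>u. encB u 0) ` P0 \<inter> (\<lambda>u. encB u 1) ` P1 = {}"
    using ne by blast
  have "{b \<in> supp D ` ?W. T \<subseteq> b} = supp D ` {c \<in> ?W. T \<subseteq> supp D c}" by auto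
  also have "card \<dots> = card {c \<in> ?W. T \<subseteq> supp D c}"
  proof (rule card_image)
    show "inj_on (supp D) {c \<in> ?W. T \<subseteq> supp D c}"
    proof (rule inj_on_subset[OF supp_inj], rule subsetI)
      fix c assume "c \<in> {c \<in> ?W. T \<subseteq> supp D c}"
      then obtain u g where "g \<in> {0, 1}" "c = encB u g" unfolding Cset_mem by blast
      then show "c \<in> {v. bword D v}" using bword_encB by simp
    qed
  qed
  also have "\<dots> = card P0 + card P1"
    unfolding set_eq using disj card_image[OF inj0] card_image[OF inj1] by (simp add: card_Un_disjoint)
  also have "\<dots> = kap - 1" unfolding P0_def P1_def by (rule pair_count[OF xyD xy(2)])
  finally show "card {b \<in> supp D ` ?W. T \<subseteq> b} = kap - 1" .
qed

end

context qsetup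
begin

definition ind :: "'a set \<Rightarrow> 'a \<Rightarrow> 'a" where "ind S = (\<lambda>x. if x \<in> S then 1 else 0)"

lemma of_nat_char2: "(of_nat k :: 'a) = (if even k then 0 else 1)"
proof (induction k)
  case 0 then show ?case by simp
next
  case (Suc k) then show ?case using one_one by (auto simp: add.commute)
qed

lemma of_nat_eq0: "(of_nat k :: 'a) = 0 \<longleftrightarrow> even k" using of_nat_char2 by simp

lemma inner:
  assumes "S \<subseteq> D"
  shows "(\<Sum>x\<in>D. ind S x * (if x \<in> D then tr m (b * x) + g else 0))
         = tr m (b * (\<Sum>x\<in>S. x)) + of_nat (card S) * g"
proof -
  have "(\<Sum>x\<in>D. ind S x * (if x \<in> D then tr m (b * x) + g else 0))
      = (\<Sum>x\<in>D. if x \<in> S then tr m (b * x) + g else 0)"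
    by (rule sum.cong) (auto simp: ind_def)
  also have "\<dots> = (\<Sum>x\<in>D \<inter> S. tr m (b * x) + g)" using sum.inter_restrict[of D "\<lambda>x. tr m (b * x) + g" S] by simp
  also have "D \<inter> S = S" using assms by auto
  also have "(\<Sum>x\<in>S. tr m (b * x) + g) = (\<Sum>x\<in>S. tr m (b * x)) + of_nat (card S) * g"
    by (simp add: sum.distrib)
  also have "(\<Sum>x\<in>S. tr m (b * x)) = tr m (b * (\<Sum>x\<in>S. x))"
    by (simp add: sum_distrib_left tr_sum[OF two])
  finally show ?thesis .
qed

lemma word_in_C: "g \<in> {0, 1} \<Longrightarrow> (\<lambda>x. if x \<in> D then tr m (b * x) + g else 0) \<in> Cset"
  unfolding Cset_def by blast

lemma ind_supp: "S \<subseteq> D \<Longrightarrow> supp D (ind S) = S"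
  unfolding supp_def ind_def by auto

lemma bword_ind: "S \<subseteq> D \<Longrightarrow> bword D (ind S)"
  unfolding bword_def ind_def by auto

lemma trm_nondeg: assumes "\<forall>b. tr m (b * s) = 0" shows "s = (0::'a)"
proof (rule ccontr)
  assume "s \<noteq> 0"
  obtain t :: 'a where "tr m t = 1" using ex_tr1 by blast
  moreover have "(t / s) * s = t" using \<open>s \<noteq> 0\<close> by simp
  moreover have "tr m ((t / s) * s) = 0" using assms by blast
  ultimately show False by simp
qed

definition Ev :: "'a set set" where
  "Ev = {S. S \<subseteq> D \<and> even (card S) \<and> (\<Sum>x\<in>S. x) = 0}"

lemma dual_eq: "dual_code D Cset = ind ` Ev"
proof (intro equalityI subsetI)
  fix v assume v: "v \<in> dual_code D Cset"
  define S where "S = supp D v"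
  have SD: "S \<subseteq> D" unfolding S_def supp_def by auto
  have bw: "bword D v" using v unfolding dual_code_def by simp
  have vS: "v = ind S" unfolding S_def ind_def by (rule bword_eq[OF bw])
  have orth: "(\<Sum>x\<in>D. v x * c x) = 0" if "c \<in> Cset" for c using v that unfolding dual_code_def by simp
  have e: "tr m (b * (\<Sum>x\<in>S. x)) + of_nat (card S) * g = 0" if "g \<in> {0, 1}" for b g
    using orth[OF word_in_C[OF that, of b]] inner[OF SD, of b g] vS by simp
  have "of_nat (card S) = (0::'a)" using e[where b=0 and g=1] by simp
  then have ev: "even (card S)" using of_nat_eq0 by simp
  have "\<forall>b. tr m (b * (\<Sum>x\<in>S. x)) = 0" using e[where g=0] by simp
  then have "(\<Sum>x\<in>S. x) = 0" by (rule trm_nondeg)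
  then have "S \<in> Ev" unfolding Ev_def using SD ev by simp
  then show "v \<in> ind ` Ev" using vS by simp
next
  fix v assume "v \<in> ind ` Ev"
  then obtain S where S: "S \<in> Ev" "v = ind S" by blast
  have SD: "S \<subseteq> D" and ev: "even (card S)" and s0: "(\<Sum>x\<in>S. x) = 0" using S(1) unfolding Ev_def by auto
  have "(\<Sum>x\<in>D. v x * c x) = 0" if "c \<in> Cset" for c
  proof -
    have "\<exists>b g. c = (\<lambda>x. if x \<in> D then tr m (b * x) + g else 0) \<and> g \<in> {0, 1}"
      using that unfolding Cset_def by (simp only: mem_Collect_eq)
    then obtain b g where c: "c = (\<lambda>x. if x \<in> D then tr m (b * x) + g else 0)" "g \<in> {0, 1}"
      by (elim exE conjE)
    show ?thesis unfolding c(1) S(2) inner[OF SD] s0 using ev of_nat_eq0 by simp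
  qed
  then show "v \<in> dual_code D Cset" unfolding dual_code_def using bword_ind[OF SD] S(2) by simp
qed

lemma ind_inj: "inj_on ind (Pow D)"
proof (rule inj_onI)
  fix S T assume "S \<in> Pow D" "T \<in> Pow D" "ind S = ind T"
  then show "S = T" using ind_supp by (metis PowD)
qed

lemma Ev_Pow: "Ev \<subseteq> Pow D" unfolding Ev_def by auto

lemma card_dual: "card (dual_code D Cset) = card Ev"
  unfolding dual_eq by (rule card_image[OF inj_on_subset[OF ind_inj Ev_Pow]])

end

context qsetup
begin

definition sd :: "'a set \<Rightarrow> 'a set \<Rightarrow> 'a set" where "sd S T = (S - T) \<union> (T - S)"

lemma sum_sd:
  fixes f :: "'a \<Rightarrow> 'a"
  assumes "finite S" "finite T"
  shows "(\<Sum>x\<in>sd S T. f x) = (\<Sum>x\<in>S. f x) + (\<Sum>x\<in>T. f x)"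
proof -
  have a: "(\<Sum>x\<in>S. f x) = (\<Sum>x\<in>S \<inter> T. f x) + (\<Sum>x\<in>S - T. f x)"
    using assms by (rule_tac sum.Int_Diff) simp
  have b: "(\<Sum>x\<in>T. f x) = (\<Sum>x\<in>S \<inter> T. f x) + (\<Sum>x\<in>T - S. f x)"
    using assms sum.Int_Diff[of T f S] by (simp add: Int_commute)
  have c: "(\<Sum>x\<in>sd S T. f x) = (\<Sum>x\<in>S - T. f x) + (\<Sum>x\<in>T - S. f x)"
    unfolding sd_def using assms by (intro sum.union_disjoint) auto
  have "(\<Sum>x\<in>S \<inter> T. f x) + (\<Sum>x\<in>S \<inter> T. f x) = 0" by (rule add_self_char2[OF two])
  then show ?thesis unfolding a b c by (simp add: algebra_simps)
qed

lemma card_sd: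
  assumes "finite S" "finite T"
  shows "(of_nat (card (sd S T)) :: 'a) = of_nat (card S) + of_nat (card T)"
  using sum_sd[OF assms, of "\<lambda>_. 1"] by simp

lemma sd_sd: "sd S (sd S T) = T" unfolding sd_def by blast

lemma sd_sub: "S \<subseteq> D \<Longrightarrow> T \<subseteq> D \<Longrightarrow> sd S T \<subseteq> D" unfolding sd_def by blast

definition fiber :: "'a \<Rightarrow> 'a \<Rightarrow> 'a set set" where
  "fiber a e = {S. S \<subseteq> D \<and> (\<Sum>x\<in>S. x) = a \<and> of_nat (card S) = e}"

lemma Ev_fiber: "Ev = fiber 0 0" unfolding Ev_def fiber_def using of_nat_eq0 by auto

lemma fin_sub: "S \<subseteq> D \<Longrightarrow> finite S" by (rule finite_subset) simp_all

lemma pair_sum_card: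
  assumes "s \<noteq> 0"
  shows "card {z\<in>D. z + s \<in> D} = kap"
proof -
  have "z + s \<in> D \<longleftrightarrow> Bf s z = Q s" if "z \<in> D" for z
  proof -
    have "Q z = 0" using that D_Q by simp
    then have "Q (z + s) = Q s + Bf s z" using Qadd[of z s] Bsym by simp
    then show ?thesis using D_Q sum01_iff[OF Q01 B01, of s s z] by auto
  qed
  then have e: "{z\<in>D. z + s \<in> D} = {z\<in>D. Bf s z = Q s}" by auto
  show ?thesis
  proof (cases "Q s = 0")
    case True
    then show ?thesis unfolding e using N_counts(1)[OF assms True, THEN conjunct2] by simp
  next
    case False
    then have "Q s = 1" using Q01 by blast
    then show ?thesis unfolding e using N_counts(2)[OF assms, THEN conjunct2] by simp
  qed
qed

lemma pair_sum_ex: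
  assumes "s \<noteq> 0"
  obtains z where "z \<in> D" "z + s \<in> D"
proof -
  have "{z\<in>D. z + s \<in> D} \<noteq> {}" using pair_sum_card[OF assms] nums by (metis card.empty less_numeral_extra(3))
  then show ?thesis using that by blast
qed

lemma fiber_ne:
  assumes "e \<in> {0, 1}"
  shows "\<exists>S. S \<in> fiber a e"
proof -
  obtain S0 where S0: "S0 \<subseteq> D" "(\<Sum>x\<in>S0. x) = a" "of_nat (card S0) = (0::'a)"
  proof (cases "a = 0")
    case True
    then show ?thesis using that[of "{}"] by simp
  next
    case False
    obtain z where z: "z \<in> D" "z + a \<in> D" using pair_sum_ex[OF False] by blast
    have ne: "z \<noteq> z + a" using False by simp
    have "(\<Sum>x\<in>{z, z + a}. x) = a" using ne add_self_char2[OF two, of z] by (simp add: add.assoc[symmetric])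
    moreover have "of_nat (card {z, z + a}) = (0::'a)" using ne two by simp
    ultimately show ?thesis using that[of "{z, z + a}"] z by simp
  qed
  show ?thesis
  proof (cases "e = 0")
    case True
    then show ?thesis using S0 unfolding fiber_def by blast
  next
    case False
    then have e1: "e = 1" using assms by simp
    have "{0} \<subseteq> D" using D0 by simp
    then have "sd {0} S0 \<in> fiber a e"
      unfolding fiber_def using sd_sub[of "{0}" S0] S0 sum_sd[of "{0}" S0 "\<lambda>x. x"] card_sd[of "{0}" S0] fin_sub e1
      by simp
    then show ?thesis by blast
  qed
qed

lemma fiber_card:
  assumes "S0 \<in> fiber a e"
  shows "card (fiber a e) = card Ev"
proof -
  have S0: "S0 \<subseteq> D" "(\<Sum>x\<in>S0. x) = a" "of_nat (card S0) = e" using assms unfolding fiber_def by auto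
  have "bij_betw (sd S0) (fiber 0 0) (fiber a e)"
  proof (rule bij_betw_byWitness[where f'="sd S0"])
    show "\<forall>K\<in>fiber 0 0. sd S0 (sd S0 K) = K" by (simp add: sd_sd)
    show "\<forall>K\<in>fiber a e. sd S0 (sd S0 K) = K" by (simp add: sd_sd)
    show "sd S0 ` fiber 0 0 \<subseteq> fiber a e"
    proof
      fix F assume "F \<in> sd S0 ` fiber 0 0"
      then obtain K where K: "K \<in> fiber 0 0" "F = sd S0 K" by blast
      then have KD: "K \<subseteq> D" "(\<Sum>x\<in>K. x) = 0" "of_nat (card K) = (0::'a)" unfolding fiber_def by auto
      show "F \<in> fiber a e" unfolding fiber_def K(2)
        using sd_sub[OF S0(1) KD(1)] sum_sd[of S0 K "\<lambda>x. x"] card_sd[of S0 K] fin_sub S0 KD by simp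
    qed
    show "sd S0 ` fiber a e \<subseteq> fiber 0 0"
    proof
      fix F assume "F \<in> sd S0 ` fiber a e"
      then obtain K where K: "K \<in> fiber a e" "F = sd S0 K" by blast
      then have KD: "K \<subseteq> D" "(\<Sum>x\<in>K. x) = a" "of_nat (card K) = e" unfolding fiber_def by auto
      show "F \<in> fiber 0 0" unfolding fiber_def K(2)
        using sd_sub[OF S0(1) KD(1)] sum_sd[of S0 K "\<lambda>x. x"] card_sd[of S0 K] fin_sub S0 KD
          add_self_char2[OF two, of a] add_self_char2[OF two, of e] by simp
    qed
  qed
  then show ?thesis unfolding Ev_fiber by (metis bij_betw_same_card)
qed

lemma card_Ev: "card Ev = 2 ^ (card D - m - 1)"
proof -
  define Tg where "Tg = (UNIV :: 'a set) \<times> {0::'a, 1}"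
  have cTg: "card Tg = 2 ^ (m + 1)" unfolding Tg_def using cardU by (simp add: card_cartesian_product)
  have PU: "Pow D = (\<Union>p\<in>Tg. fiber (fst p) (snd p))"
  proof (intro equalityI subsetI)
    fix S assume "S \<in> Pow D"
    moreover have "of_nat (card S) \<in> {0::'a, 1}" using of_nat_char2[of "card S"] by simp
    ultimately show "S \<in> (\<Union>p\<in>Tg. fiber (fst p) (snd p))" unfolding Tg_def fiber_def by force
  qed (auto simp: fiber_def)
  have "card (Pow D) = (\<Sum>p\<in>Tg. card (fiber (fst p) (snd p)))"
    unfolding PU by (rule card_UN_disjoint) (auto simp: Tg_def fiber_def)
  also have "\<dots> = (\<Sum>p\<in>Tg. card Ev)"
  proof (rule sum.cong[OF refl])
    fix p assume "p \<in> Tg"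
    then have "snd p \<in> {0, 1}" unfolding Tg_def by auto
    then obtain S where "S \<in> fiber (fst p) (snd p)" using fiber_ne by blast
    then show "card (fiber (fst p) (snd p)) = card Ev" by (rule fiber_card)
  qed
  also have "\<dots> = 2 ^ (m + 1) * card Ev" using cTg by simp
  finally have e: "2 ^ card D = 2 ^ (m + 1) * card Ev" by (simp add: card_Pow)
  have "{} \<in> Ev" unfolding Ev_def by simp
  then have "card Ev \<ge> 1" using Ev_Pow
    by (metis One_nat_def Suc_leI card_gt_0_iff empty_iff finite_Pow_iff finite finite_subset)
  then have "(2::nat) ^ (m + 1) \<le> 2 ^ card D" using e by simp
  then have le: "m + 1 \<le> card D" using power_increasing_iff[of "2::nat" "m + 1" "card D"] by simp
  then have "card D = (m + 1) + (card D - m - 1)" by simp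
  then have "(2::nat) ^ card D = 2 ^ (m + 1) * 2 ^ (card D - m - 1)" by (metis power_add)
  then show ?thesis using e by simp
qed

end

context qsetup
begin

lemma wt_ind: "S \<subseteq> D \<Longrightarrow> wt D (ind S) = card S"
  unfolding wt_def using ind_supp by simp

lemma swap2: "a + s = b \<longleftrightarrow> a = b + (s::'a)"
proof -
  have ss: "c + s + s = c" for c by (simp add: add.assoc add_self_char2[OF two])
  show ?thesis using ss[of a] ss[of b] by auto
qed

lemma Ev_sub: "S \<in> Ev \<Longrightarrow> S \<subseteq> D" unfolding Ev_def by simp

lemma blocks4: "supp D ` {v \<in> dual_code D Cset. wt D v = 4} = {S \<in> Ev. card S = 4}"
proof (intro equalityI subsetI)
  fix b assume "b \<in> supp D ` {v \<in> dual_code D Cset. wt D v = 4}"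
  then obtain v where v: "v \<in> dual_code D Cset" "wt D v = 4" "b = supp D v" by blast
  then obtain S where S: "S \<in> Ev" "v = ind S" unfolding dual_eq by blast
  show "b \<in> {S \<in> Ev. card S = 4}" using v S ind_supp[OF Ev_sub[OF S(1)]] wt_ind[OF Ev_sub[OF S(1)]] by simp
next
  fix S assume S: "S \<in> {S \<in> Ev. card S = 4}"
  then have "ind S \<in> dual_code D Cset" unfolding dual_eq by blast
  moreover have "wt D (ind S) = 4" using S wt_ind[OF Ev_sub] by simp
  moreover have "S = supp D (ind S)" using S ind_supp[OF Ev_sub] by simp
  ultimately show "S \<in> supp D ` {v \<in> dual_code D Cset. wt D v = 4}" by blast
qed

lemma block_form:
  assumes S: "S \<in> Ev" "card S = 4" and xyz: "x \<in> S" "y \<in> S" "x \<noteq> y" "z \<in> S" "z \<noteq> x" "z \<noteq> y"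
  shows "S = {x, y, z, z + (x + y)}"
proof -
  have fin: "finite S" using fin_sub[OF Ev_sub[OF S(1)]] .
  have c3: "card {x, y, z} = 3" using xyz by simp
  have "{x, y, z} \<subseteq> S" using xyz by simp
  then have "card (S - {x, y, z}) = 1" using c3 S(2) fin by (simp add: card_Diff_subset)
  then obtain w where w: "S - {x, y, z} = {w}" by (metis One_nat_def card_1_singletonE)
  then have wS: "w \<in> S" "w \<noteq> x" "w \<noteq> y" "w \<noteq> z" by auto
  have SE: "S = {x, y, z, w}" using w xyz by auto
  have "(\<Sum>u\<in>S. u) = 0" using S(1) unfolding Ev_def by simp
  then have "x + y + z + w = 0" unfolding SE using xyz wS by (simp add: add.assoc)
  then have "w = x + y + z" using eq_iff_add_char2[OF two, of "x + y + z" w] by simp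
  then show ?thesis unfolding SE by (simp add: algebra_simps)
qed

lemma dual_pair_count:
  assumes xy: "x \<in> D" "y \<in> D" "x \<noteq> y"
  shows "2 * card {S \<in> Ev. card S = 4 \<and> {x, y} \<subseteq> S} = kap - 2"
proof -
  define s where "s = x + y"
  have s0: "s \<noteq> 0" unfolding s_def using xy(3) eq_iff_add_char2[OF two] by blast
  have xs: "x + s = y" "y + s = x"
  proof -
    have "x + s = (x + x) + y" unfolding s_def by (simp only: add.assoc)
    then show "x + s = y" using add_self_char2[OF two, of x] by simp
    have "y + s = (y + y) + x" unfolding s_def by (simp only: add.assoc add.commute add.left_commute)
    then show "y + s = x" using add_self_char2[OF two, of y] by simp
  qed
  define BT where "BT = {S \<in> Ev. card S = 4 \<and> {x, y} \<subseteq> S}"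
  define E where "E = {z\<in>D. z + s \<in> D} - {x, y}"
  have cE: "card E = kap - 2"
  proof -
    have "{x, y} \<subseteq> {z\<in>D. z + s \<in> D}" using xy xs by auto
    then show ?thesis unfolding E_def using pair_sum_card[OF s0] xy(3) by (simp add: card_Diff_subset)
  qed
  have form: "S = {x, y, z, z + s}" if "S \<in> BT" "z \<in> S - {x, y}" for S z
    using block_form[of S x y z] that xy(3) unfolding BT_def s_def by auto
  have EU: "E = (\<Union>S\<in>BT. S - {x, y})"
  proof (intro equalityI subsetI)
    fix z assume z: "z \<in> E"
    then have zD: "z \<in> D" "z + s \<in> D" "z \<noteq> x" "z \<noteq> y" unfolding E_def by auto
    have zs: "z + s \<noteq> x" "z + s \<noteq> y" "z \<noteq> z + s"
    proof -
      show "z + s \<noteq> x" using zD(4) xs(1) swap2[of z s x] by simp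
      show "z + s \<noteq> y" using zD(3) xs(2) swap2[of z s y] by simp
      show "z \<noteq> z + s" using s0 by simp
    qed
    define S where "S = {x, y, z, z + s}"
    have "card S = 4" unfolding S_def using xy(3) zD zs by auto
    moreover have "(\<Sum>u\<in>S. u) = 0"
    proof -
      have "(\<Sum>u\<in>S. u) = x + (y + (z + (z + s)))" unfolding S_def using xy(3) zD zs by simp
      also have "\<dots> = (x + y) + s + (z + z)" by (simp add: algebra_simps)
      also have "\<dots> = 0" unfolding s_def by (simp add: two)
      finally show ?thesis .
    qed
    moreover have "S \<subseteq> D" unfolding S_def using xy zD by auto
    ultimately have "S \<in> BT" unfolding BT_def Ev_def S_def by auto
    moreover have "z \<in> S - {x, y}" unfolding S_def using zD by auto
    ultimately show "z \<in> (\<Union>S\<in>BT. S - {x, y})" by blast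
  next
    fix z assume "z \<in> (\<Union>S\<in>BT. S - {x, y})"
    then obtain S where S: "S \<in> BT" "z \<in> S - {x, y}" by blast
    have "S = {x, y, z, z + s}" by (rule form[OF S])
    moreover have "S \<subseteq> D" using S(1) Ev_sub unfolding BT_def by auto
    ultimately show "z \<in> E" unfolding E_def using S(2) by auto
  qed
  have "BT \<subseteq> Pow D" unfolding BT_def using Ev_Pow by auto
  then have finBT: "finite BT" by (rule finite_subset) simp
  have "card E = (\<Sum>S\<in>BT. card (S - {x, y}))"
    unfolding EU
  proof (rule card_UN_disjoint[OF finBT])
    show "\<forall>S\<in>BT. finite (S - {x, y})" by simp
    show "\<forall>S\<in>BT. \<forall>S'\<in>BT. S \<noteq> S' \<longrightarrow> (S - {x, y}) \<inter> (S' - {x, y}) = {}"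
    proof (intro ballI impI)
      fix S S' assume "S \<in> BT" "S' \<in> BT" "S \<noteq> S'"
      show "(S - {x, y}) \<inter> (S' - {x, y}) = {}"
      proof (rule ccontr)
        assume "(S - {x, y}) \<inter> (S' - {x, y}) \<noteq> {}"
        then obtain z where "z \<in> S - {x, y}" "z \<in> S' - {x, y}" by blast
        then have "S = {x, y, z, z + s}" "S' = {x, y, z, z + s}" using form \<open>S \<in> BT\<close> \<open>S' \<in> BT\<close> by auto
        then show False using \<open>S \<noteq> S'\<close> by simp
      qed
    qed
  qed
  also have "\<dots> = (\<Sum>S\<in>BT. 2)"
  proof (rule sum.cong[OF refl])
    fix S assume "S \<in> BT"
    then have "{x, y} \<subseteq> S" "card S = 4" "finite S" unfolding BT_def using fin_sub[OF Ev_sub] by auto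
    then show "card (S - {x, y}) = 2" using xy(3) by (simp add: card_Diff_subset)
  qed
  also have "\<dots> = 2 * card BT" by simp
  finally show ?thesis using cE unfolding BT_def by simp
qed

end

context qsetup
begin

lemma lam_dual: "2 * (2^(2*r-3) - 2^(r-2) - 1) = kap - 2"
proof -
  obtain p where p: "(2::nat) ^ (r - 2) = p + 2"
  proof -
    have "(2::nat) ^ 1 \<le> 2 ^ (r - 2)" using r3 by (intro power_increasing) auto
    then show ?thesis using that[of "2 ^ (r - 2) - 2"] by simp
  qed
  have "r - 1 = Suc (r - 2)" using r3 by simp
  then have hg: "h = 2 * 2 ^ (r - 2)" by simp
  have e3: "(2::nat) ^ (2*r-3) = 2 * 2 ^ (r - 2) * 2 ^ (r - 2)"
  proof -
    have "2*r-3 = 1 + (r - 2) + (r - 2)" using r3 by simp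
    then show ?thesis by (simp only: power_add power_one_right)
  qed
  show ?thesis unfolding kap_eq e3 hg p by (simp add: algebra_simps)
qed

lemma lam_C: "2^(2*r-2) - 2^(r-1) - 1 = kap - 1"
proof -
  have "2^(2*r-2) = h * h" using HH_eq HH_stmt by simp
  moreover have "kap = h * h - h" unfolding kap_eq by (simp add: diff_mult_distrib2)
  ultimately show ?thesis by simp
qed

lemma design_dual: "holds_design D (dual_code D Cset) 2 (card D) 4 (2^(2*r-3) - 2^(r-2) - 1)"
  unfolding holds_design_def is_design_def blocks4
proof (intro conjI allI impI ballI)
  show "finite D" by simp
  show "card D = card D" ..
  show "b \<subseteq> D" "card b = 4" if "b \<in> {S \<in> Ev. card S = 4}" for b using that Ev_sub by auto
  fix T assume T: "T \<subseteq> D \<and> card T = 2"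
  then obtain x y where xy: "T = {x, y}" "x \<noteq> y" by (meson card_2_iff)
  have xyD: "x \<in> D" "y \<in> D" using T xy by auto
  have "{b \<in> {S \<in> Ev. card S = 4}. T \<subseteq> b} = {S \<in> Ev. card S = 4 \<and> {x, y} \<subseteq> S}" using xy by auto
  then have "2 * card {b \<in> {S \<in> Ev. card S = 4}. T \<subseteq> b} = 2 * (2^(2*r-3) - 2^(r-2) - 1)"
    using dual_pair_count[OF xyD xy(2)] lam_dual by simp
  then show "card {b \<in> {S \<in> Ev. card S = 4}. T \<subseteq> b} = 2^(2*r-3) - 2^(r-2) - 1" by simp
qed

lemma ge4:
  assumes "S \<in> Ev" "S \<noteq> {}"
  shows "card S \<ge> 4"
proof -
  have fin: "finite S" using fin_sub[OF Ev_sub[OF assms(1)]] .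
  have ev: "even (card S)" and s0: "(\<Sum>x\<in>S. x) = 0" using assms(1) unfolding Ev_def by auto
  have c0: "card S \<noteq> 0" using fin assms(2) by simp
  have c2: "card S \<noteq> 2"
  proof
    assume "card S = 2"
    then obtain a b where ab: "S = {a, b}" "a \<noteq> b" by (meson card_2_iff)
    then have "a + b = 0" using s0 by simp
    then show False using ab(2) eq_iff_add_char2[OF two] by simp
  qed
  show ?thesis using ev c0 c2 by presburger
qed

lemma ind_empty: "ind {} = (\<lambda>_. 0)" unfolding ind_def by simp

lemma ind_ne: "x \<in> S \<Longrightarrow> ind S \<noteq> (\<lambda>_. 0)"
proof
  assume "x \<in> S" "ind S = (\<lambda>_. 0)"
  then have "ind S x = 0" by simp
  then show False using \<open>x \<in> S\<close> unfolding ind_def by simp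
qed

lemma mindist_dual: "min_dist D (dual_code D Cset) = 4"
proof -
  define A where "A = {wt D c | c. c \<in> dual_code D Cset \<and> c \<noteq> (\<lambda>_. 0)}"
  have ge: "a \<ge> 4" if "a \<in> A" for a
  proof -
    obtain c where c: "a = wt D c" "c \<in> dual_code D Cset" "c \<noteq> (\<lambda>_. 0)" using \<open>a \<in> A\<close> unfolding A_def by blast
    then obtain S where S: "S \<in> Ev" "c = ind S" unfolding dual_eq by blast
    then have "S \<noteq> {}" using c(3) ind_empty by auto
    then show ?thesis using c(1) S ge4 wt_ind[OF Ev_sub] by simp
  qed
  have in4: "4 \<in> A"
  proof -
    have "card (D - {0}) > 0" using nums D0 by (simp add: card_Diff_singleton)
    then have "D - {0} \<noteq> {}" by (metis card.empty less_irrefl)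
    then obtain y where y: "y \<in> D" "y \<noteq> 0" by blast
    have "2 * card {S \<in> Ev. card S = 4 \<and> {0, y} \<subseteq> S} = kap - 2"
      using dual_pair_count[OF D0 y(1)] y(2) by simp
    then have "{S \<in> Ev. card S = 4 \<and> {0, y} \<subseteq> S} \<noteq> {}"
    proof (intro notI)
      assume a1: "2 * card {S \<in> Ev. card S = 4 \<and> {0, y} \<subseteq> S} = kap - 2" and a2: "{S \<in> Ev. card S = 4 \<and> {0, y} \<subseteq> S} = {}"
      have "card {S \<in> Ev. card S = 4 \<and> {0, y} \<subseteq> S} = 0" unfolding a2 by simp
      then have "kap - 2 = 0" using a1 by linarith
      then show False using nums(5) by simp
    qed
    then obtain S where S: "S \<in> Ev" "card S = 4" "0 \<in> S" by blast
    have "ind S \<in> dual_code D Cset" unfolding dual_eq using S(1) by blast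
    moreover have "ind S \<noteq> (\<lambda>_. 0)" using ind_ne[OF S(3)] .
    moreover have "wt D (ind S) = 4" using wt_ind[OF Ev_sub[OF S(1)]] S(2) by simp
    ultimately show ?thesis unfolding A_def by (intro CollectI exI[of _ "ind S"]) simp
  qed
  have "finite A" unfolding A_def by simp
  have "Min A = 4"
  proof (rule Min_eqI[OF \<open>finite A\<close>])
    show "\<And>y. y \<in> A \<Longrightarrow> 4 \<le> y" using ge by blast
  qed (rule in4)
  then show ?thesis unfolding min_dist_def A_def .
qed

end

theorem corollary3p9:
  fixes r m :: nat and D :: "'a::{field,finite} set" and C :: "('a \<Rightarrow> 'a) set"
  assumes "r \<ge> 3" and "m = 2 * r" and "card (UNIV :: 'a set) = 2 ^ m"
    and "D = {x. tr r (x ^ (2 ^ r + 1)) = 0}"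
    and "C = {(\<lambda>x. if x \<in> D then tr m (b * x) + c else 0) | b c. c \<in> {0, 1}}"
  shows "has_params D C (2^(r-1) * (2^r - 1)) (m + 1) (2^(r-1) * (2^(r-1) - 1))
    \<and> weight_enum D C = 1 + monom (2^(2*r) - 1) (2^(r-1) * (2^(r-1) - 1))
                          + monom (2^(2*r) - 1) (2^(2*r-2))
                          + monom 1 (2^(r-1) * (2^r - 1))
    \<and> has_params D (dual_code D C) (2^(r-1) * (2^r - 1)) (2^(r-1) * (2^r - 1) - m - 1) 4
    \<and> holds_design D C 2 (2^(r-1) * (2^r - 1)) (2^(r-1) * (2^(r-1) - 1))
        (2^(2*r-2) - 2^(r-1) - 1)
    \<and> holds_design D (dual_code D C) 2 (2^(r-1) * (2^r - 1)) 4
        (2^(2*r-3) - 2^(r-2) - 1)"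
proof -
  interpret qsetup r m D using assms(1-4) by unfold_locales
  have C: "C = Cset" using assms(5) unfolding Cset_def by simp
  have 1: "has_params D Cset (2^(r-1) * (2^r - 1)) (m + 1) (2^(r-1) * (2^(r-1) - 1))"
    unfolding has_params_def kap_stmt[symmetric] card_D[symmetric] using card_Cset mindist_C by simp
  have 2: "weight_enum D Cset = 1 + monom (2^(2*r) - 1) (2^(r-1) * (2^(r-1) - 1))
                          + monom (2^(2*r) - 1) (2^(2*r-2))
                          + monom 1 (2^(r-1) * (2^r - 1))" by (rule wenum)
  have 3: "has_params D (dual_code D Cset) (2^(r-1) * (2^r - 1)) (2^(r-1) * (2^r - 1) - m - 1) 4"
    unfolding has_params_def card_D[symmetric] using card_dual card_Ev mindist_dual by simp
  have 4: "holds_design D Cset 2 (2^(r-1) * (2^r - 1)) (2^(r-1) * (2^(r-1) - 1)) (2^(2*r-2) - 2^(r-1) - 1)"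
    unfolding kap_stmt[symmetric] card_D[symmetric] lam_C by (rule design_C)
  have 5: "holds_design D (dual_code D Cset) 2 (2^(r-1) * (2^r - 1)) 4 (2^(2*r-3) - 2^(r-2) - 1)"
    unfolding card_D[symmetric] by (rule design_dual)
  show ?thesis unfolding C using 1 2 3 4 5 by blast
qed


end
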